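(* Let $1<R<\infty$, $\mathbb A=A(1,R)$, $h\in\mathcal H(\mathbb A,\ast)$, and $U(\rho)=\frac1{2\pi\rho}\int_{|z|=\rho}|h|^2|dz|$ for $1<\rho<R$. Then $\rho\mapsto\rho\,\dot U(\rho)$ is strictly increasing on $(1,R)$, $U(\rho)>1$ for $1<\rho<R$, the limit $\dot U(1):=\lim_{\rho\searrow1}\rho\,\dot U(\rho)$ exists and satisfies $0\leqslant\dot U(1)<\infty$, and for every $1<\rho<R$ $$\frac1\pi\iint_{A(1,\rho)}|Dh|^2=\rho\,\dot U(\rho)-\dot U(1)<\infty .$$
   Context: $A(a,b)=\{a<|z|<b\}$. $\mathcal H(\mathbb A,\ast)$ denotes the set of sense-preserving harmonic homeomorphisms $h$ of $\mathbb A=A(1,R)$ onto some doubly connected domain whose inner boundary is the unit circle (the bounded complementary component is the closed unit disk), preserving the order of boundary components; in particular $|h(z)|\to1$ as $|z|\searrow1$. $\dot U$ is the derivative in $\rho$; $|Dh|^2=2(|h_z|^2+|h_{\bar z}|^2)$. *)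

theory Defs
  imports "HOL-Analysis.Analysis"
begin

definition annulus :: "real \<Rightarrow> real \<Rightarrow> complex set" where
  "annulus a b = {z. a < cmod z \<and> cmod z < b}"

definition px :: "(complex \<Rightarrow> complex) \<Rightarrow> complex \<Rightarrow> complex" where
  "px f z = vector_derivative (\<lambda>t::real. f (z + of_real t)) (at 0)"

definition py :: "(complex \<Rightarrow> complex) \<Rightarrow> complex \<Rightarrow> complex" where
  "py f z = vector_derivative (\<lambda>t::real. f (z + \<i> * of_real t)) (at 0)"

definition C1_on :: "complex set \<Rightarrow> (complex \<Rightarrow> complex) \<Rightarrow> bool" where
  "C1_on S f \<longleftrightarrow> (\<forall>z\<in>S. f differentiable (at z)) \<and>
                    continuous_on S (px f) \<and> continuous_on S (py f)"

definition harmonic_on :: "complex set \<Rightarrow> (complex \<Rightarrow> complex) \<Rightarrow> bool" where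
  "harmonic_on S h \<longleftrightarrow> open S \<and> C1_on S h \<and> C1_on S (px h) \<and> C1_on S (py h) \<and>
     (\<forall>z\<in>S. px (px h) z + py (py h) z = 0)"

definition dz :: "(complex \<Rightarrow> complex) \<Rightarrow> complex \<Rightarrow> complex" where
  "dz h z = (px h z - \<i> * py h z) / 2"

definition dzbar :: "(complex \<Rightarrow> complex) \<Rightarrow> complex \<Rightarrow> complex" where
  "dzbar h z = (px h z + \<i> * py h z) / 2"

definition jac :: "(complex \<Rightarrow> complex) \<Rightarrow> complex \<Rightarrow> real" where
  "jac h z = (cmod (dz h z))\<^sup>2 - (cmod (dzbar h z))\<^sup>2"

definition Dnorm2 :: "(complex \<Rightarrow> complex) \<Rightarrow> complex \<Rightarrow> real" where
  "Dnorm2 h z = 2 * ((cmod (dz h z))\<^sup>2 + (cmod (dzbar h z))\<^sup>2)"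

text \<open>The class H(A(1,R),*): sense-preserving harmonic homeomorphisms of A(1,R) onto a
  doubly connected domain whose bounded complementary component is the closed unit disk,
  preserving the order of the boundary components (|h(z)| -> 1 as |z| -> 1).\<close>
definition H_star :: "real \<Rightarrow> (complex \<Rightarrow> complex) set" where
  "H_star R = {h. harmonic_on (annulus 1 R) h \<and>
      (\<forall>z\<in>annulus 1 R. jac h z \<ge> 0) \<and>
      (\<exists>g. homeomorphism (annulus 1 R) (h ` annulus 1 R) h g) \<and>
      open (h ` annulus 1 R) \<and> connected (h ` annulus 1 R) \<and>
      card (components (- h ` annulus 1 R)) = 2 \<and>
      connected_component_set (- h ` annulus 1 R) 0 = cball 0 1 \<and>
      (\<forall>e>0. \<exists>d>0. \<forall>z\<in>annulus 1 R. cmod z < 1 + d \<longrightarrow> \<bar>cmod (h z) - 1\<bar> < e)}"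

text \<open>U(rho) = (1/(2 pi rho)) \<integral>_{|z|=rho} |h|^2 |dz| = (1/2pi) \<integral>_0^{2pi} |h(rho e^{it})|^2 dt.\<close>
definition U :: "(complex \<Rightarrow> complex) \<Rightarrow> real \<Rightarrow> real" where
  "U h \<rho> = (1 / (2 * pi)) * integral {0..2*pi} (\<lambda>t. (cmod (h (of_real \<rho> * cis t)))\<^sup>2)"

end

theory Submission
  imports Defs
begin

lemma transfer_bounded:
  fixes g :: "'a::euclidean_space \<Rightarrow> 'b::euclidean_space" and h :: "'b \<Rightarrow> 'a"
    and f :: "'b \<Rightarrow> 'c::banach"
  assumes hg: "\<And>x. h (g x) = x" and gh: "\<And>y. g (h y) = y"
    and contg: "\<And>x. continuous (at x) g"
    and gbox: "\<And>u v. \<exists>w z. g ` cbox u v = cbox w z"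
    and hbox: "\<And>u v. \<exists>w z. h ` cbox u v = cbox w z"
    and cont: "\<And>u v. measure lborel (g ` cbox u v) = measure lborel (cbox u v)"
    and fi: "(f has_integral i) S" and Sb: "S \<subseteq> cbox c d"
  shows "((\<lambda>x. f (g x)) has_integral i) (h ` S)"
proof -
  have 1: "((\<lambda>y. if y \<in> S then f y else 0) has_integral i) (cbox c d)"
    using fi Sb by simp
  have 2: "((\<lambda>x. (\<lambda>y. if y \<in> S then f y else 0) (g x)) has_integral (1/1) *\<^sub>R i) (h ` cbox c d)"
    by (rule has_integral_twiddle[OF _ hg gh contg gbox hbox _ 1]) (simp_all add: cont)
  have 3: "(\<lambda>x. (\<lambda>y. if y \<in> S then f y else 0) (g x)) = (\<lambda>x. if x \<in> h ` S then f (g x) else 0)"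
    proof (rule ext)
    fix x show "(\<lambda>y. if y \<in> S then f y else 0) (g x) = (if x \<in> h ` S then f (g x) else 0)"
      using hg gh by (metis image_eqI imageE)
  qed
  have 4: "h ` S \<subseteq> h ` cbox c d" using Sb by blast
  show ?thesis using 2 unfolding 3 using has_integral_restrict[OF 4, of "\<lambda>x. f (g x)"] by simp
qed


definition L2 :: "real^2 \<Rightarrow> complex" where "L2 v = Complex (v$1) (v$2)"
definition Lm2 :: "complex \<Rightarrow> real^2" where "Lm2 z = (\<chi> i. if i = 1 then Re z else Im z)"
definition P2 :: "real^2 \<Rightarrow> real \<times> real" where "P2 v = (v$1, v$2)"
definition Q2 :: "real \<times> real \<Rightarrow> real^2" where "Q2 p = (\<chi> i. if i = 1 then fst p else snd p)"

lemma Lm2_nth [simp]: "Lm2 z $ 1 = Re z" "Lm2 z $ 2 = Im z" by (simp_all add: Lm2_def)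
lemma Q2_nth [simp]: "Q2 p $ 1 = fst p" "Q2 p $ 2 = snd p" by (simp_all add: Q2_def)


lemma vec2_eqI: "(x::'a::zero^2) $ 1 = y $ 1 \<Longrightarrow> x $ 2 = y $ 2 \<Longrightarrow> x = y"
  by (simp add: vec_eq_iff forall_2)

lemma L2_Lm2 [simp]: "L2 (Lm2 z) = z" by (simp add: L2_def complex_eq_iff)
lemma Lm2_L2 [simp]: "Lm2 (L2 v) = v" by (rule vec2_eqI) (simp_all add: L2_def)
lemma P2_Q2 [simp]: "P2 (Q2 p) = p" by (simp add: P2_def Q2_def)
lemma Q2_P2 [simp]: "Q2 (P2 v) = v" by (rule vec2_eqI) (simp_all add: P2_def)

lemma Lm2_cbox: "Lm2 ` cbox u v = cbox (Lm2 u) (Lm2 v)"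
proof -
  have "x \<in> Lm2 ` cbox u v \<longleftrightarrow> x \<in> cbox (Lm2 u) (Lm2 v)" for x
  proof -
    have "x \<in> Lm2 ` cbox u v \<longleftrightarrow> L2 x \<in> cbox u v"
      by (metis L2_Lm2 Lm2_L2 image_iff)
    also have "\<dots> \<longleftrightarrow> x \<in> cbox (Lm2 u) (Lm2 v)"
      by (simp add: cbox_complex_eq mem_box_cart forall_2 L2_def)
    finally show ?thesis .
  qed
  then show ?thesis by blast
qed

lemma L2_cbox: "L2 ` cbox u v = cbox (L2 u) (L2 v)"
proof -
  have "x \<in> L2 ` cbox u v \<longleftrightarrow> x \<in> cbox (L2 u) (L2 v)" for x
  proof -
    have "x \<in> L2 ` cbox u v \<longleftrightarrow> Lm2 x \<in> cbox u v"
      by (metis L2_Lm2 Lm2_L2 image_iff)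
    also have "\<dots> \<longleftrightarrow> x \<in> cbox (L2 u) (L2 v)"
      by (simp add: cbox_complex_eq mem_box_cart forall_2 L2_def)
    finally show ?thesis .
  qed
  then show ?thesis by blast
qed

lemma content_complex: "measure lborel (cbox u (v::complex)) = (if cbox u v = {} then 0 else (Re v - Re u) * (Im v - Im u))"
  by (simp add: content_cbox_if Basis_complex_def)

lemma content_r2: "measure lborel (cbox u (v::real^2)) = (if cbox u v = {} then 0 else (v$1 - u$1) * (v$2 - u$2))"
  by (simp only: content_cbox_if_cart UNIV_2) simp

lemma Lm2_content: "measure lborel (Lm2 ` cbox u v) = measure lborel (cbox u v)"
proof -
  have e: "cbox (Lm2 u) (Lm2 v) = {} \<longleftrightarrow> cbox u v = {}" by (metis Lm2_cbox image_is_empty)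
  show ?thesis unfolding Lm2_cbox content_complex content_r2 e by simp
qed

lemma cont_Lm2: "continuous (at x) Lm2"
proof -
  have "continuous_on UNIV Lm2" unfolding Lm2_def
    apply (intro continuous_on_vec_lambda)
    subgoal for i by (cases "i = 1") (simp_all add: continuous_on_Re continuous_on_Im continuous_on_id)
    done
  then show ?thesis by (simp add: continuous_on_eq_continuous_at)
qed

lemma transfer_r2_complex:
  fixes f :: "complex \<Rightarrow> 'c::banach"
  assumes "((\<lambda>v. f (L2 v)) has_integral i) S" "S \<subseteq> cbox c d"
  shows "(f has_integral i) (L2 ` S)"
proof -
  have "((\<lambda>x. (\<lambda>v. f (L2 v)) (Lm2 x)) has_integral i) (L2 ` S)"
    by (rule transfer_bounded[where g=Lm2 and h=L2, OF L2_Lm2 Lm2_L2 cont_Lm2 _ _ Lm2_content assms])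
       (metis Lm2_cbox, metis L2_cbox)
  then show ?thesis by simp
qed

lemma P2_cbox: "P2 ` cbox u v = cbox (P2 u) (P2 v)"
proof -
  have "x \<in> P2 ` cbox u v \<longleftrightarrow> x \<in> cbox (P2 u) (P2 v)" for x
  proof -
    have "x \<in> P2 ` cbox u v \<longleftrightarrow> Q2 x \<in> cbox u v"
      by (metis P2_Q2 Q2_P2 image_iff)
    also have "\<dots> \<longleftrightarrow> x \<in> cbox (P2 u) (P2 v)"
      by (cases x) (simp add: cbox_Pair_eq mem_box_cart forall_2 P2_def)
    finally show ?thesis .
  qed
  then show ?thesis by blast
qed

lemma Q2_cbox: "Q2 ` cbox u v = cbox (Q2 u) (Q2 v)"
proof -
  obtain a b where u: "u = (a,b)" by force
  obtain c d where v: "v = (c,d)" by force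
  have "x \<in> Q2 ` cbox u v \<longleftrightarrow> x \<in> cbox (Q2 u) (Q2 v)" for x
  proof -
    have "x \<in> Q2 ` cbox u v \<longleftrightarrow> P2 x \<in> cbox u v"
      by (metis P2_Q2 Q2_P2 image_iff)
    also have "\<dots> \<longleftrightarrow> x \<in> cbox (Q2 u) (Q2 v)"
      by (simp add: u v cbox_Pair_eq mem_box_cart forall_2 P2_def)
    finally show ?thesis .
  qed
  then show ?thesis by blast
qed

lemma P2_content: "measure lborel (P2 ` cbox u v) = measure lborel (cbox u v)"
proof -
  have e: "cbox (P2 u) (P2 v) = {} \<longleftrightarrow> cbox u v = {}" by (metis P2_cbox image_is_empty)
  have "measure lborel (cbox (P2 u) (P2 v)) = measure lborel (cbox u v)"
  proof (cases "cbox u v = {}")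
    case True then show ?thesis using e by simp
  next
    case False
    then have "u$1 \<le> v$1" "u$2 \<le> v$2" by (auto simp: mem_box_cart) (metis order_trans)+
    then show ?thesis using False unfolding content_r2 unfolding P2_def content_Pair by simp
  qed
  then show ?thesis by (simp add: P2_cbox)
qed

lemma cont_P2: "continuous (at x) P2"
  unfolding P2_def by (intro continuous_intros)

lemma transfer_prod_r2:
  fixes f :: "real \<times> real \<Rightarrow> 'c::banach"
  assumes "(f has_integral i) (cbox (a,c) (b,d))"
  shows "((\<lambda>v. f (P2 v)) has_integral i) (cbox (Q2 (a,c)) (Q2 (b,d)))"
proof -
  have "((\<lambda>v. f (P2 v)) has_integral i) (Q2 ` cbox (a,c) (b,d))"
    by (rule transfer_bounded[where g=P2 and h=Q2, OF Q2_P2 P2_Q2 cont_P2 _ _ P2_content assms order_refl])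
       (metis P2_cbox, metis Q2_cbox)
  then show ?thesis by (simp add: Q2_cbox)
qed


definition pol :: "real^2 \<Rightarrow> real^2" where
  "pol v = (\<chi> i. if i = 1 then v$1 * cos (v$2) else v$1 * sin (v$2))"
definition pol' :: "real^2 \<Rightarrow> real^2 \<Rightarrow> real^2" where
  "pol' v w = (\<chi> i. if i = 1 then cos (v$2) * w$1 - v$1 * sin (v$2) * w$2
                     else sin (v$2) * w$1 + v$1 * cos (v$2) * w$2)"

lemma vec2_split: "(\<chi> i. if i = 1 then x else y) = x *\<^sub>R axis (1::2) (1::real) + y *\<^sub>R axis 2 1"
  by (rule vec2_eqI) (simp_all add: axis_def)

lemma hd_nth: "((\<lambda>x::real^'n. x $ i) has_derivative (\<lambda>h. h $ i)) F"
  by (rule bounded_linear_imp_has_derivative) (rule bounded_linear_vec_nth)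

lemma pol_deriv: "(pol has_derivative pol' v) (at v within S)"
proof -
  have "((\<lambda>v. (v$1 * cos (v$2)) *\<^sub>R axis (1::2) (1::real) + (v$1 * sin (v$2)) *\<^sub>R axis 2 1) has_derivative
     (\<lambda>w. (cos (v$2) * w$1 - v$1 * sin (v$2) * w$2) *\<^sub>R axis (1::2) (1::real) +
          (sin (v$2) * w$1 + v$1 * cos (v$2) * w$2) *\<^sub>R axis 2 1)) (at v within S)"
    by (rule derivative_eq_intros hd_nth refl | simp)+ (simp add: algebra_simps)
  then show ?thesis unfolding pol_def pol'_def vec2_split .
qed

lemma pol_det: "det (matrix (pol' v)) = v$1"
proof -
  have "det (matrix (pol' v)) = v$1 * (cos (v$2))^2 + v$1 * (sin (v$2))^2"
    by (simp add: det_2 matrix_def pol'_def axis_def power2_eq_square algebra_simps)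
  also have "\<dots> = v$1" by (simp flip: distrib_left)
  finally show ?thesis .
qed

lemma L2_pol: "L2 (pol v) = of_real (v$1) * cis (v$2)"
  by (simp add: L2_def pol_def complex_eq_iff)

lemma cmod_L2_pol: "v$1 \<ge> 0 \<Longrightarrow> cmod (L2 (pol v)) = v$1"
  by (simp add: L2_pol norm_mult)

lemma pol_inj:
  assumes "\<And>v. v \<in> S \<Longrightarrow> v$1 > 0 \<and> 0 \<le> v$2 \<and> v$2 < 2*pi"
  shows "inj_on pol S"
proof
  fix v w assume v: "v \<in> S" and w: "w \<in> S" and e: "pol v = pol w"
  have e2: "L2 (pol v) = L2 (pol w)" using e by simp
  have 1: "v$1 = w$1" using cmod_L2_pol[of v] cmod_L2_pol[of w] assms[OF v] assms[OF w] e2 by simp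
  have "Arg2pi (L2 (pol v)) = v$2"
    by (rule Arg2pi_unique[of "v$1"]) (use assms[OF v] in \<open>simp_all add: L2_pol cis_conv_exp\<close>)
  moreover have "Arg2pi (L2 (pol w)) = w$2"
    by (rule Arg2pi_unique[of "w$1"]) (use assms[OF w] in \<open>simp_all add: L2_pol cis_conv_exp\<close>)
  ultimately have 2: "v$2 = w$2" using e2 by simp
  show "v = w" using 1 2 by (rule vec2_eqI)
qed


lemma L2_pol_expand: "(\<lambda>x. L2 (pol x)) = (\<lambda>x. of_real (x$1 * cos (x$2)) + \<i> * of_real (x$1 * sin (x$2)))"
  by (rule ext) (simp add: L2_def pol_def complex_eq_iff)

lemma polar_integral:
  fixes F :: "complex \<Rightarrow> real"
  assumes a: "0 < a" "a < b" and cF: "continuous_on {z. a \<le> cmod z \<and> cmod z \<le> b} F"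
  shows "(F has_integral integral {a..b} (\<lambda>r. integral {0..2*pi} (\<lambda>t. r * F (of_real r * cis t)))) (annulus a b)"
proof -
  define \<psi> where "\<psi> = (\<lambda>p::real\<times>real. fst p * F (of_real (fst p) * cis (snd p)))"
  define J where "J = integral {a..b} (\<lambda>x. integral {0..2*pi} (\<lambda>y. \<psi> (x,y)))"
  define S where "S = box (Q2 (a,0)) (Q2 (b,2*pi))"
  define T where "T = cbox (Q2 (a,0)) (Q2 (b,2*pi))"
  have Sprop: "v$1 > a \<and> v$1 < b \<and> 0 < v$2 \<and> v$2 < 2*pi" if "v \<in> S" for v
    using that unfolding S_def mem_box_cart forall_2 by simp
  have Tprop: "v$1 \<ge> a \<and> v$1 \<le> b \<and> 0 \<le> v$2 \<and> v$2 \<le> 2*pi" if "v \<in> T" for v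
    using that unfolding T_def mem_box_cart forall_2 by simp
  have cmod1: "cmod (of_real x * cis y) = \<bar>x\<bar>" for x y by (simp add: norm_mult)
  have c1: "continuous_on (cbox (a,0) (b,2*pi)) (\<lambda>x. complex_of_real (fst x) * cis (snd x))"
    unfolding cis_conv_exp by (intro continuous_intros)
  have c2: "continuous_on (cbox (a,0) (b,2*pi)) (\<lambda>x. F (complex_of_real (fst x) * cis (snd x)))"
    by (rule continuous_on_compose2[OF cF c1]) (use a in \<open>auto simp: cmod1 cbox_Pair_eq\<close>)
  have c\<psi>: "continuous_on (cbox (a,0) (b,2*pi)) \<psi>"
    unfolding \<psi>_def by (intro continuous_intros c2)
  have "(\<psi> has_integral J) (cbox (a,0) (b,2*pi))"
    using integrable_integral[OF integrable_continuous[OF c\<psi>]] integral_prod_continuous[OF c\<psi>]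
    unfolding J_def by (simp add: cbox_interval)
  then have "((\<lambda>v. \<psi> (P2 v)) has_integral J) T"
    unfolding T_def by (rule transfer_prod_r2)
  then have hS: "((\<lambda>v. \<psi> (P2 v)) has_integral J) S"
    unfolding S_def T_def by (simp add: has_integral_open_interval)
  have psiP2: "\<psi> (P2 v) = v$1 * F (L2 (pol v))" for v
    by (simp add: \<psi>_def P2_def L2_pol)
  define f :: "real^2 \<Rightarrow> real^1" where "f y = F (L2 y) *\<^sub>R vec 1" for y
  define G where "G x = \<bar>det (matrix (pol' x))\<bar> *\<^sub>R f (pol x)" for x
  have G: "G x = (\<bar>x$1\<bar> * F (L2 (pol x))) *\<^sub>R vec 1" for x
    by (simp add: G_def f_def pol_det)
  have hG: "(G has_integral J *\<^sub>R vec 1) S"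
  proof (rule has_integral_eq[OF _ has_integral_scaleR_left[OF hS]])
    fix x assume "x \<in> S" then show "\<psi> (P2 x) *\<^sub>R vec 1 = G x"
      using Sprop[of x] a by (simp add: G psiP2)
  qed
  have c3: "continuous_on T (\<lambda>x. L2 (pol x))"
    unfolding L2_pol_expand by (intro continuous_intros)
  have c4: "continuous_on T (\<lambda>x. F (L2 (pol x)))"
    by (rule continuous_on_compose2[OF cF c3]) (use Tprop a cmod_L2_pol in force)
  have cG: "continuous_on T G"
    unfolding G by (intro continuous_intros c4)
  have aiT: "G absolutely_integrable_on T"
    unfolding T_def by (rule absolutely_integrable_continuous) (use cG T_def in simp)
  have aiS: "G absolutely_integrable_on S"
    using aiT unfolding S_def T_def by (simp add: absolutely_integrable_on_open_interval)
  have Sleb: "S \<in> sets lebesgue"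
    unfolding S_def by (simp add: lebesgue_openin[of UNIV] open_box)
  have injS: "inj_on pol S"
    by (rule pol_inj) (use Sprop a in force)
  have "f absolutely_integrable_on (pol ` S) \<and> integral (pol ` S) f = J *\<^sub>R vec 1"
    using has_absolute_integral_change_of_variables[OF Sleb pol_deriv injS, of f "J *\<^sub>R vec 1"]
      aiS integral_unique[OF hG] unfolding G_def by blast
  then have "(f has_integral J *\<^sub>R vec 1) (pol ` S)"
    by (metis absolutely_integrable_on_def has_integral_integrable_integral)
  from has_integral_linear[OF this bounded_linear_vec_nth[of 1]]
  have h1: "((\<lambda>y. F (L2 y)) has_integral J) (pol ` S)"
    by (simp add: o_def f_def)
  have sub: "pol ` S \<subseteq> cbox (Q2 (-b,-b)) (Q2 (b,b))"
  proof clarify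
    fix v assume v: "v \<in> S"
    have "\<bar>v$1 * cos (v$2)\<bar> \<le> \<bar>v$1\<bar>" "\<bar>v$1 * sin (v$2)\<bar> \<le> \<bar>v$1\<bar>"
      unfolding abs_mult by (rule mult_left_le, simp_all add: abs_cos_le_one abs_sin_le_one)+
    then have "\<bar>v$1 * cos (v$2)\<bar> \<le> b" "\<bar>v$1 * sin (v$2)\<bar> \<le> b"
      using Sprop[OF v] a by auto
    then show "pol v \<in> cbox (Q2 (- b, - b)) (Q2 (b, b))"
      unfolding mem_box_cart forall_2 by (simp add: pol_def abs_le_iff)
  qed
  have h2: "(F has_integral J) (L2 ` pol ` S)"
    by (rule transfer_r2_complex[OF h1 sub])
  have sub1: "L2 ` pol ` S \<subseteq> annulus a b"
    using Sprop cmod_L2_pol a by (force simp: annulus_def)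
  have sub2: "annulus a b - {z. z \<bullet> \<i> = 0} \<subseteq> L2 ` pol ` S"
  proof (rule subsetI)
    fix z assume zz: "z \<in> annulus a b - {z. z \<bullet> \<i> = 0}"
    then have z: "z \<in> annulus a b" and nz: "z \<bullet> \<i> \<noteq> 0" by auto
    have Imz: "Im z \<noteq> 0" using nz by (simp add: inner_complex_def)
    then have "Arg2pi z \<noteq> 0" by (simp add: Arg2pi_eq_0 complex_is_Real_iff)
    then have A: "0 < Arg2pi z" "Arg2pi z < 2*pi" using Arg2pi[of z] by auto
    define v where "v = Q2 (cmod z, Arg2pi z)"
    have "v \<in> S" using z A unfolding v_def S_def mem_box_cart forall_2 annulus_def by simp
    moreover have "L2 (pol v) = z"
      by (simp add: v_def L2_def pol_def cos_Arg2pi sin_Arg2pi complex_eq_iff)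
    ultimately show "z \<in> L2 ` pol ` S" by force
  qed
  have neg: "negligible {z::complex. z \<bullet> \<i> = 0}"
    by (rule negligible_standard_hyperplane) (simp add: Basis_complex_def)
  have "(F has_integral J) (annulus a b)"
  proof (rule has_integral_spike_set_eq[THEN iffD1, OF _ _ h2])
    have "{x \<in> L2 ` pol ` S - annulus a b. F x \<noteq> 0} = {}" using sub1 by blast
    then show "negligible {x \<in> L2 ` pol ` S - annulus a b. F x \<noteq> 0}" by (metis negligible_empty)
    show "negligible {x \<in> annulus a b - L2 ` pol ` S. F x \<noteq> 0}"
      by (rule negligible_subset[OF neg]) (use sub2 in blast)
  qed
  then show ?thesis unfolding J_def \<psi>_def by simp
qed


lemma px_py_eq:
  assumes d: "(f has_derivative f') (at z)"
  shows "px f z = f' 1" "py f z = f' \<i>"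
proof -
  have lin: "linear f'" using d by (rule has_derivative_linear)
  have "((\<lambda>t::real. f (z + of_real t)) has_derivative (\<lambda>t. f' (of_real t))) (at 0)"
  proof (rule has_derivative_compose[of "\<lambda>t::real. z + of_real t" "\<lambda>t. of_real t" 0 UNIV f f', simplified])
    show "((\<lambda>t. z + complex_of_real t) has_derivative complex_of_real) (at 0)"
      by (auto intro!: derivative_eq_intros)
  qed (use d in simp)
  moreover have "f' (of_real t) = t *\<^sub>R f' 1" for t
    using linear_scale[OF lin, of t 1] by (simp add: scaleR_conv_of_real)
  ultimately have "((\<lambda>t::real. f (z + of_real t)) has_vector_derivative f' 1) (at 0)"
    by (simp add: has_vector_derivative_def)
  then show "px f z = f' 1" unfolding px_def by (rule vector_derivative_at)
  have "((\<lambda>t::real. f (z + \<i> * of_real t)) has_derivative (\<lambda>t. f' (\<i> * of_real t))) (at 0)"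
  proof (rule has_derivative_compose[of "\<lambda>t::real. z + \<i> * of_real t" "\<lambda>t. \<i> * of_real t" 0 UNIV f f', simplified])
    show "((\<lambda>t. z + \<i> * complex_of_real t) has_derivative (\<lambda>t. \<i> * complex_of_real t)) (at 0)"
      by (auto intro!: derivative_eq_intros)
  qed (use d in simp)
  moreover have "f' (\<i> * of_real t) = t *\<^sub>R f' \<i>" for t
    using linear_scale[OF lin, of t \<i>] by (simp add: scaleR_conv_of_real mult.commute)
  ultimately have "((\<lambda>t::real. f (z + \<i> * of_real t)) has_vector_derivative f' \<i>) (at 0)"
    by (simp add: has_vector_derivative_def)
  then show "py f z = f' \<i>" unfolding py_def by (rule vector_derivative_at)
qed

lemma deriv_pxpy:
  assumes "f differentiable (at z)"
  shows "(f has_derivative (\<lambda>v. Re v *\<^sub>R px f z + Im v *\<^sub>R py f z)) (at z)"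
proof -
  obtain f' where d: "(f has_derivative f') (at z)" using assms differentiable_def by blast
  have lin: "linear f'" using d by (rule has_derivative_linear)
  have eqv: "f' v = Re v *\<^sub>R f' 1 + Im v *\<^sub>R f' \<i>" for v
  proof -
    have "v = Re v *\<^sub>R 1 + Im v *\<^sub>R \<i>" by (simp add: complex_eq_iff)
    then have "f' v = f' (Re v *\<^sub>R 1 + Im v *\<^sub>R \<i>)" by simp
    also have "\<dots> = Re v *\<^sub>R f' 1 + Im v *\<^sub>R f' \<i>"
      by (simp add: linear_add[OF lin] linear_scale[OF lin])
    finally show ?thesis .
  qed
  have "f' v = Re v *\<^sub>R px f z + Im v *\<^sub>R py f z" for v
    using eqv[of v] px_py_eq[OF d] by simp
  then have "f' = (\<lambda>v. Re v *\<^sub>R px f z + Im v *\<^sub>R py f z)" by (rule ext)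
  then show ?thesis using d by simp
qed

lemma chain_pxpy:
  fixes \<gamma> :: "real \<Rightarrow> complex"
  assumes "f differentiable (at (\<gamma> s))" and "(\<gamma> has_vector_derivative \<gamma>') (at s within S)"
  shows "((\<lambda>s. f (\<gamma> s)) has_vector_derivative (Re \<gamma>' *\<^sub>R px f (\<gamma> s) + Im \<gamma>' *\<^sub>R py f (\<gamma> s))) (at s within S)"
proof -
  have "((\<lambda>s. f (\<gamma> s)) has_derivative (\<lambda>x. (\<lambda>v. Re v *\<^sub>R px f (\<gamma> s) + Im v *\<^sub>R py f (\<gamma> s)) (x *\<^sub>R \<gamma>'))) (at s within S)"
    using has_derivative_compose[OF assms(2)[unfolded has_vector_derivative_def] deriv_pxpy[OF assms(1)]] .
  then show ?thesis
    unfolding has_vector_derivative_def by (simp add: scaleR_add_right algebra_simps)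
qed

lemma vd_inner:
  fixes g k :: "real \<Rightarrow> 'a::real_inner"
  assumes "(g has_vector_derivative g') (at x within S)" "(k has_vector_derivative k') (at x within S)"
  shows "((\<lambda>x. g x \<bullet> k x) has_field_derivative (g x \<bullet> k' + g' \<bullet> k x)) (at x within S)"
proof -
  have "((\<lambda>x. g x \<bullet> k x) has_derivative (\<lambda>h. g x \<bullet> (h *\<^sub>R k') + (h *\<^sub>R g') \<bullet> k x)) (at x within S)"
    using has_derivative_inner[OF assms[unfolded has_vector_derivative_def]] .
  moreover have "(\<lambda>h. g x \<bullet> (h *\<^sub>R k') + (h *\<^sub>R g') \<bullet> k x) = (*) (g x \<bullet> k' + g' \<bullet> k x)"
    by (rule ext) (simp add: algebra_simps)
  ultimately show ?thesis unfolding has_field_derivative_def by simp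
qed

lemma aux4: "2*(((x+y)/2)^2 + ((u-v)/2)^2 + ((x-y)/2)^2 + ((u+v)/2)^2) = x^2+u^2+v^2+(y^2::real)"
  by (simp add: power2_eq_square field_simps)
lemma Dnorm2_eq: "Dnorm2 h z = (cmod (px h z))\<^sup>2 + (cmod (py h z))\<^sup>2"
proof -
  have "Dnorm2 h z = 2*(((Re (px h z) + Im (py h z))/2)^2 + ((Im (px h z) - Re (py h z))/2)^2 + ((Re (px h z) - Im (py h z))/2)^2 + ((Im (px h z) + Re (py h z))/2)^2)"
    unfolding Dnorm2_def dz_def dzbar_def cmod_power2 by simp
  then show ?thesis unfolding aux4 cmod_power2 by simp
qed

definition Hr :: "(complex \<Rightarrow> complex) \<Rightarrow> real \<Rightarrow> real \<Rightarrow> complex" where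
  "Hr h r t = cos t *\<^sub>R px h (of_real r * cis t) + sin t *\<^sub>R py h (of_real r * cis t)"
definition Hrr :: "(complex \<Rightarrow> complex) \<Rightarrow> real \<Rightarrow> real \<Rightarrow> complex" where
  "Hrr h r t = cos t *\<^sub>R (cos t *\<^sub>R px (px h) (of_real r * cis t) + sin t *\<^sub>R py (px h) (of_real r * cis t))
             + sin t *\<^sub>R (cos t *\<^sub>R px (py h) (of_real r * cis t) + sin t *\<^sub>R py (py h) (of_real r * cis t))"
definition Ht :: "(complex \<Rightarrow> complex) \<Rightarrow> real \<Rightarrow> real \<Rightarrow> complex" where
  "Ht h r t = (- (r * sin t)) *\<^sub>R px h (of_real r * cis t) + (r * cos t) *\<^sub>R py h (of_real r * cis t)"
definition Htt :: "(complex \<Rightarrow> complex) \<Rightarrow> real \<Rightarrow> real \<Rightarrow> complex" where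
  "Htt h r t = (- (r * cos t)) *\<^sub>R px h (of_real r * cis t)
     + (- (r * sin t)) *\<^sub>R ((- (r * sin t)) *\<^sub>R px (px h) (of_real r * cis t) + (r * cos t) *\<^sub>R py (px h) (of_real r * cis t))
     + (- (r * sin t)) *\<^sub>R py h (of_real r * cis t)
     + (r * cos t) *\<^sub>R ((- (r * sin t)) *\<^sub>R px (py h) (of_real r * cis t) + (r * cos t) *\<^sub>R py (py h) (of_real r * cis t))"
definition Phi :: "(complex \<Rightarrow> complex) \<Rightarrow> real \<Rightarrow> real \<Rightarrow> real" where
  "Phi h r t = h (of_real r * cis t) \<bullet> h (of_real r * cis t)"
definition Phir :: "(complex \<Rightarrow> complex) \<Rightarrow> real \<Rightarrow> real \<Rightarrow> real" where
  "Phir h r t = 2 * (h (of_real r * cis t) \<bullet> Hr h r t)"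
definition Phirr :: "(complex \<Rightarrow> complex) \<Rightarrow> real \<Rightarrow> real \<Rightarrow> real" where
  "Phirr h r t = 2 * (Hr h r t \<bullet> Hr h r t + h (of_real r * cis t) \<bullet> Hrr h r t)"
definition Qf :: "(complex \<Rightarrow> complex) \<Rightarrow> real \<Rightarrow> real \<Rightarrow> real" where
  "Qf h r t = 2 * (h (of_real r * cis t) \<bullet> Ht h r t)"
definition Qs :: "(complex \<Rightarrow> complex) \<Rightarrow> real \<Rightarrow> real \<Rightarrow> real" where
  "Qs h r t = 2 * (Ht h r t \<bullet> Ht h r t + h (of_real r * cis t) \<bullet> Htt h r t)"

lemma ray_vd: "((\<lambda>r. of_real r * cis t) has_vector_derivative cis t) (at r within S)"
  by (auto intro!: derivative_eq_intros)

lemma ang_vd: "((\<lambda>s. of_real r * cis s) has_vector_derivative (of_real r * (\<i> * cis s))) (at s within S)"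
proof -
  have "(cis has_derivative (\<lambda>x. x *\<^sub>R (\<i> * cis s))) (at s within S)"
    using has_derivative_cis[OF has_derivative_ident, of s S] by simp
  then have "(cis has_vector_derivative (\<i> * cis s)) (at s within S)"
    by (simp add: has_vector_derivative_def)
  then show ?thesis by (rule has_vector_derivative_mult_right)
qed

lemma key_identity:
  fixes r c s :: real and h0 a b p q u v :: complex
  assumes cs: "c^2 + s^2 = 1" and lap: "p + v = 0"
  defines "H1 \<equiv> c *\<^sub>R a + s *\<^sub>R b"
  defines "H2 \<equiv> c *\<^sub>R (c *\<^sub>R p + s *\<^sub>R q) + s *\<^sub>R (c *\<^sub>R u + s *\<^sub>R v)"
  defines "T1 \<equiv> (- (r * s)) *\<^sub>R a + (r * c) *\<^sub>R b"
  defines "T2 \<equiv> (- (r * c)) *\<^sub>R a + (- (r * s)) *\<^sub>R ((- (r * s)) *\<^sub>R p + (r * c) *\<^sub>R q)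
     + (- (r * s)) *\<^sub>R b + (r * c) *\<^sub>R ((- (r * s)) *\<^sub>R u + (r * c) *\<^sub>R v)"
  shows "r * (2 * (h0 \<bullet> H1) + r * (2 * (H1 \<bullet> H1 + h0 \<bullet> H2))) + 2 * (T1 \<bullet> T1 + h0 \<bullet> T2)
       = 2 * r^2 * ((cmod a)^2 + (cmod b)^2)"
proof -
  have v: "Re v = - Re p" "Im v = - Im p" using lap by (auto simp: complex_eq_iff)
  have s2: "s^2 = 1 - c^2" using cs by simp
  show ?thesis
    unfolding H1_def H2_def T1_def T2_def inner_complex_def cmod_power2
    apply (simp add: v)
    apply (simp add: algebra_simps power2_eq_square[symmetric])
    using cs apply algebra
    done
qed


locale harm =
  fixes R :: real and h :: "complex \<Rightarrow> complex"
  assumes R1: "1 < R" and harm: "harmonic_on (annulus 1 R) h"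
begin

lemma openA: "open (annulus 1 R)" using harm by (simp add: harmonic_on_def)

lemma diff_h: "z \<in> annulus 1 R \<Longrightarrow> h differentiable (at z)"
  and diff_hx: "z \<in> annulus 1 R \<Longrightarrow> px h differentiable (at z)"
  and diff_hy: "z \<in> annulus 1 R \<Longrightarrow> py h differentiable (at z)"
  using harm by (auto simp: harmonic_on_def C1_on_def)

lemma cont_hx: "continuous_on (annulus 1 R) (px h)"
  and cont_hy: "continuous_on (annulus 1 R) (py h)"
  and cont_hxx: "continuous_on (annulus 1 R) (px (px h))"
  and cont_hxy: "continuous_on (annulus 1 R) (py (px h))"
  and cont_hyx: "continuous_on (annulus 1 R) (px (py h))"
  and cont_hyy: "continuous_on (annulus 1 R) (py (py h))"
  using harm by (auto simp: harmonic_on_def C1_on_def)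

lemma lap: "z \<in> annulus 1 R \<Longrightarrow> px (px h) z + py (py h) z = 0"
  using harm by (auto simp: harmonic_on_def)

lemma cont_h: "continuous_on (annulus 1 R) h"
  by (meson continuous_at_imp_continuous_on diff_h differentiable_imp_continuous_within)

lemma wA: "1 < r \<Longrightarrow> r < R \<Longrightarrow> of_real r * cis t \<in> annulus 1 R"
  by (simp add: annulus_def norm_mult)

lemma cw:
  assumes "continuous_on (annulus 1 R) k"
  shows "continuous_on ({1<..<R} \<times> T) (\<lambda>p. k (of_real (fst p) * cis (snd p)))"
proof (rule continuous_on_compose2[OF assms])
  show "continuous_on ({1<..<R} \<times> T) (\<lambda>p. complex_of_real (fst p) * cis (snd p))"
    unfolding cis_conv_exp by (intro continuous_intros)
  show "(\<lambda>p. complex_of_real (fst p) * cis (snd p)) ` ({1<..<R} \<times> T) \<subseteq> annulus 1 R"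
    using wA by auto
qed

lemma cw1:
  assumes "continuous_on (annulus 1 R) k" "1 < r" "r < R"
  shows "continuous_on T (\<lambda>t. k (of_real r * cis t))"
proof (rule continuous_on_compose2[OF assms(1)])
  show "continuous_on T (\<lambda>t. complex_of_real r * cis t)"
    unfolding cis_conv_exp by (intro continuous_intros)
qed (use wA assms in auto)

lemma ray_gen:
  assumes "\<And>z. z \<in> annulus 1 R \<Longrightarrow> f differentiable (at z)" "1 < r" "r < R"
  shows "((\<lambda>r. f (of_real r * cis t)) has_vector_derivative
           (cos t *\<^sub>R px f (of_real r * cis t) + sin t *\<^sub>R py f (of_real r * cis t))) (at r within S)"
  using chain_pxpy[OF assms(1)[OF wA[OF assms(2,3)]] ray_vd] by simp

lemma ang_gen:
  assumes "\<And>z. z \<in> annulus 1 R \<Longrightarrow> f differentiable (at z)" "1 < r" "r < R"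
  shows "((\<lambda>s. f (of_real r * cis s)) has_vector_derivative
           ((- (r * sin s)) *\<^sub>R px f (of_real r * cis s) + (r * cos s) *\<^sub>R py f (of_real r * cis s))) (at s within S)"
  using chain_pxpy[OF assms(1)[OF wA[OF assms(2,3)]] ang_vd] by simp

lemma vd_scale: "(f has_vector_derivative f') F \<Longrightarrow> ((\<lambda>x. c *\<^sub>R f x) has_vector_derivative c *\<^sub>R f') F"
  by (rule bounded_linear.has_vector_derivative[OF bounded_linear_scaleR_right])

lemma Hr_vd: "1 < r \<Longrightarrow> r < R \<Longrightarrow> ((\<lambda>r. h (of_real r * cis t)) has_vector_derivative Hr h r t) (at r within S)"
  unfolding Hr_def by (rule ray_gen[OF diff_h])

lemma Hrr_vd:
  assumes "1 < r" "r < R"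
  shows "((\<lambda>r. Hr h r t) has_vector_derivative Hrr h r t) (at r within S)"
  unfolding Hr_def Hrr_def
  by (intro has_vector_derivative_add vd_scale ray_gen[OF diff_hx] ray_gen[OF diff_hy] assms)

lemma Ht_vd: "1 < r \<Longrightarrow> r < R \<Longrightarrow> ((\<lambda>s. h (of_real r * cis s)) has_vector_derivative Ht h r s) (at s within S)"
  unfolding Ht_def by (rule ang_gen[OF diff_h])

lemma Htt_vd:
  assumes "1 < r" "r < R"
  shows "((\<lambda>s. Ht h r s) has_vector_derivative Htt h r s) (at s within S)"
proof -
  have a: "((\<lambda>s. - (r * sin s)) has_field_derivative - (r * cos s)) (at s within S)"
    by (auto intro!: derivative_eq_intros)
  have b: "((\<lambda>s. r * cos s) has_field_derivative - (r * sin s)) (at s within S)"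
    by (auto intro!: derivative_eq_intros)
  have "((\<lambda>s. Ht h r s) has_vector_derivative
     ((- (r * sin s)) *\<^sub>R ((- (r * sin s)) *\<^sub>R px (px h) (of_real r * cis s) + (r * cos s) *\<^sub>R py (px h) (of_real r * cis s))
       + (- (r * cos s)) *\<^sub>R px h (of_real r * cis s))
     + ((r * cos s) *\<^sub>R ((- (r * sin s)) *\<^sub>R px (py h) (of_real r * cis s) + (r * cos s) *\<^sub>R py (py h) (of_real r * cis s))
       + (- (r * sin s)) *\<^sub>R py h (of_real r * cis s))) (at s within S)"
    unfolding Ht_def
    by (intro has_vector_derivative_add has_vector_derivative_scaleR a b ang_gen[OF diff_hx] ang_gen[OF diff_hy] assms)
  then show ?thesis by (simp add: Htt_def algebra_simps)
qed

lemma Phi_deriv: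
  assumes "1 < r" "r < R"
  shows "((\<lambda>r. Phi h r t) has_field_derivative Phir h r t) (at r within S)"
  unfolding Phi_def Phir_def
  using vd_inner[OF Hr_vd[OF assms, of t S] Hr_vd[OF assms, of t S]] by (simp add: inner_commute)

lemma Phir_deriv:
  assumes "1 < r" "r < R"
  shows "((\<lambda>r. Phir h r t) has_field_derivative Phirr h r t) (at r within S)"
  unfolding Phir_def Phirr_def
  using DERIV_cmult[OF vd_inner[OF Hr_vd[OF assms, of t S] Hrr_vd[OF assms, of t S]], of 2]
  by (simp add: inner_commute algebra_simps)

lemma Qf_deriv:
  assumes "1 < r" "r < R"
  shows "((\<lambda>s. Qf h r s) has_field_derivative Qs h r s) (at s within S)"
  unfolding Qf_def Qs_def
  using DERIV_cmult[OF vd_inner[OF Ht_vd[OF assms, of s S] Htt_vd[OF assms, of s S]], of 2]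
  by (simp add: inner_commute algebra_simps)

lemma identity:
  assumes "1 < r" "r < R"
  shows "r * (Phir h r t + r * Phirr h r t) + Qs h r t = 2 * r^2 * Dnorm2 h (of_real r * cis t)"
  unfolding Phir_def Phirr_def Qs_def Hr_def Hrr_def Ht_def Htt_def Dnorm2_eq
  by (rule key_identity[OF sin_cos_squared_add2 lap[OF wA[OF assms]]])

end

context harm begin

lemma leib:
  fixes f fx :: "real \<Rightarrow> real \<Rightarrow> real"
  assumes d: "\<And>x t. x \<in> {1<..<R} \<Longrightarrow> ((\<lambda>x. f x t) has_field_derivative fx x t) (at x within {1<..<R})"
    and c1: "\<And>x. x \<in> {1<..<R} \<Longrightarrow> continuous_on {0..2*pi} (f x)"
    and c2: "continuous_on ({1<..<R} \<times> {0..2*pi}) (\<lambda>(x,t). fx x t)"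
    and \<rho>: "\<rho> \<in> {1<..<R}"
  shows "((\<lambda>x. integral {0..2*pi} (f x)) has_field_derivative integral {0..2*pi} (fx \<rho>)) (at \<rho>)"
proof -
  have "((\<lambda>x. integral (cbox 0 (2*pi)) (f x)) has_field_derivative integral (cbox 0 (2*pi)) (fx \<rho>)) (at \<rho> within {1<..<R})"
    by (rule leibniz_rule_field_derivative[OF d _ _ \<rho>])
       (use c1 c2 in \<open>auto intro: integrable_continuous_real simp: cbox_interval\<close>)
  then show ?thesis using \<rho> by (simp add: cbox_interval at_within_open[OF _ open_greaterThanLessThan])
qed

lemma cont_Phi1: "x \<in> {1<..<R} \<Longrightarrow> continuous_on T (Phi h x)"
  unfolding Phi_def by (intro continuous_intros cw1[OF cont_h]) auto

lemma cont_Phir1: "x \<in> {1<..<R} \<Longrightarrow> continuous_on T (Phir h x)"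
  unfolding Phir_def Hr_def by (intro continuous_intros cw1[OF cont_h] cw1[OF cont_hx] cw1[OF cont_hy]) auto

lemma cont_Phir2: "continuous_on ({1<..<R} \<times> T) (\<lambda>(x,t). Phir h x t)"
  unfolding Phir_def Hr_def split_beta
  by (intro continuous_intros cw[OF cont_h] cw[OF cont_hx] cw[OF cont_hy])

lemma cont_Phirr1: "x \<in> {1<..<R} \<Longrightarrow> continuous_on T (Phirr h x)"
  unfolding Phirr_def Hr_def Hrr_def
  by (intro continuous_intros cw1[OF cont_h] cw1[OF cont_hx] cw1[OF cont_hy]
      cw1[OF cont_hxx] cw1[OF cont_hxy] cw1[OF cont_hyx] cw1[OF cont_hyy]) auto

lemma cont_Phirr2: "continuous_on ({1<..<R} \<times> T) (\<lambda>(x,t). Phirr h x t)"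
  unfolding Phirr_def Hr_def Hrr_def split_beta
  by (intro continuous_intros cw[OF cont_h] cw[OF cont_hx] cw[OF cont_hy]
      cw[OF cont_hxx] cw[OF cont_hxy] cw[OF cont_hyx] cw[OF cont_hyy])

lemma cont_Dn: "continuous_on (annulus 1 R) (Dnorm2 h)"
  unfolding Dnorm2_eq by (intro continuous_intros cont_hx cont_hy)

lemma cont_Qs1: "x \<in> {1<..<R} \<Longrightarrow> continuous_on T (Qs h x)"
  unfolding Qs_def Ht_def Htt_def
  by (intro continuous_intros cw1[OF cont_h] cw1[OF cont_hx] cw1[OF cont_hy]
      cw1[OF cont_hxx] cw1[OF cont_hxy] cw1[OF cont_hyx] cw1[OF cont_hyy]) auto

lemma U_eq: "U h = (\<lambda>\<rho>. 1 / (2*pi) * integral {0..2*pi} (Phi h \<rho>))"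
  unfolding U_def Phi_def by (simp add: power2_norm_eq_inner)

lemma U_deriv:
  assumes "\<rho> \<in> {1<..<R}"
  shows "(U h has_field_derivative 1 / (2*pi) * integral {0..2*pi} (Phir h \<rho>)) (at \<rho>)"
  unfolding U_eq
  by (rule DERIV_cmult, rule leib[OF Phi_deriv cont_Phi1 cont_Phir2 assms]) auto

definition Gf :: "real \<Rightarrow> real" where
  "Gf \<rho> = \<rho> * (1 / (2*pi) * integral {0..2*pi} (Phir h \<rho>))"

definition Kf :: "real \<Rightarrow> real" where
  "Kf \<rho> = \<rho> / pi * integral {0..2*pi} (\<lambda>t. Dnorm2 h (of_real \<rho> * cis t))"

lemma G_eq: "\<rho> \<in> {1<..<R} \<Longrightarrow> \<rho> * deriv (U h) \<rho> = Gf \<rho>"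
  using DERIV_imp_deriv[OF U_deriv] by (simp add: Gf_def)

lemma U_differentiable: "\<rho> \<in> {1<..<R} \<Longrightarrow> U h differentiable (at \<rho>)"
  using U_deriv real_differentiable_def by blast

lemma Qs_int:
  assumes "\<rho> \<in> {1<..<R}"
  shows "integral {0..2*pi} (Qs h \<rho>) = 0"
proof -
  have "(Qs h \<rho> has_integral (Qf h \<rho> (2*pi) - Qf h \<rho> 0)) {0..2*pi}"
    by (rule fundamental_theorem_of_calculus)
       (use assms in \<open>auto simp: has_real_derivative_iff_has_vector_derivative[symmetric] intro!: Qf_deriv\<close>)
  moreover have "Qf h \<rho> (2*pi) = Qf h \<rho> 0"
    by (simp add: Qf_def Ht_def cis.code)
  ultimately show ?thesis by (simp add: integral_unique)
qed

lemma G_deriv: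
  assumes \<rho>: "\<rho> \<in> {1<..<R}"
  shows "(Gf has_field_derivative Kf \<rho>) (at \<rho>)"
proof -
  have d: "(Gf has_field_derivative (1 * (1 / (2*pi) * integral {0..2*pi} (Phir h \<rho>)) +
                \<rho> * (1 / (2*pi) * integral {0..2*pi} (Phirr h \<rho>)))) (at \<rho>)"
  proof -
    have a: "((\<lambda>x. integral {0..2*pi} (Phir h x)) has_field_derivative integral {0..2*pi} (Phirr h \<rho>)) (at \<rho>)"
      by (rule leib[OF Phir_deriv cont_Phir1 cont_Phirr2 \<rho>]) auto
    have b: "((\<lambda>x. 1 / (2*pi) * integral {0..2*pi} (Phir h x)) has_field_derivative 1 / (2*pi) * integral {0..2*pi} (Phirr h \<rho>)) (at \<rho>)"
      by (rule DERIV_cmult[OF a])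
    show ?thesis unfolding Gf_def[abs_def] using DERIV_mult[OF DERIV_ident b] by (simp add: mult.commute)
  qed
  have r1: "1 < \<rho>" "\<rho> < R" using \<rho> by auto
  have pw: "Phir h \<rho> t + \<rho> * Phirr h \<rho> t = 2 * \<rho> * Dnorm2 h (of_real \<rho> * cis t) - Qs h \<rho> t / \<rho>" for t
    using identity[OF r1, of t] r1 by (simp add: field_simps power2_eq_square)
  have iPhir: "Phir h \<rho> integrable_on {0..2*pi}" using cont_Phir1[OF \<rho>] by (rule integrable_continuous_real)
  have iPhirr: "Phirr h \<rho> integrable_on {0..2*pi}" using cont_Phirr1[OF \<rho>] by (rule integrable_continuous_real)
  have iQs: "Qs h \<rho> integrable_on {0..2*pi}" using cont_Qs1[OF \<rho>] by (rule integrable_continuous_real)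
  have cDn: "continuous_on {0..2*pi} (\<lambda>t. Dnorm2 h (of_real \<rho> * cis t))"
    by (rule cw1[OF cont_Dn r1])
  have iDn: "(\<lambda>t. Dnorm2 h (of_real \<rho> * cis t)) integrable_on {0..2*pi}"
    using cDn by (rule integrable_continuous_real)
  have "integral {0..2*pi} (Phir h \<rho>) + \<rho> * integral {0..2*pi} (Phirr h \<rho>)
      = integral {0..2*pi} (\<lambda>t. Phir h \<rho> t + \<rho> * Phirr h \<rho> t)"
    using integral_add[OF iPhir integrable_on_mult_right[OF iPhirr, of \<rho>]] by simp
  also have "\<dots> = integral {0..2*pi} (\<lambda>t. 2 * \<rho> * Dnorm2 h (of_real \<rho> * cis t) - Qs h \<rho> t / \<rho>)"
    by (simp add: pw)
  also have "\<dots> = 2 * \<rho> * integral {0..2*pi} (\<lambda>t. Dnorm2 h (of_real \<rho> * cis t)) - integral {0..2*pi} (Qs h \<rho>) / \<rho>"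
    using integral_diff[OF integrable_on_mult_right[OF iDn, of "2*\<rho>"] integrable_on_divide[OF iQs, of \<rho>]] by simp
  also have "\<dots> = 2 * \<rho> * integral {0..2*pi} (\<lambda>t. Dnorm2 h (of_real \<rho> * cis t))"
    using Qs_int[OF \<rho>] by simp
  finally have e: "integral {0..2*pi} (Phir h \<rho>) + \<rho> * integral {0..2*pi} (Phirr h \<rho>)
      = 2 * \<rho> * integral {0..2*pi} (\<lambda>t. Dnorm2 h (of_real \<rho> * cis t))" .
  have "1 * (1 / (2*pi) * integral {0..2*pi} (Phir h \<rho>)) + \<rho> * (1 / (2*pi) * integral {0..2*pi} (Phirr h \<rho>))
      = (integral {0..2*pi} (Phir h \<rho>) + \<rho> * integral {0..2*pi} (Phirr h \<rho>)) / (2*pi)"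
    by (simp add: field_simps)
  also have "\<dots> = Kf \<rho>" unfolding e Kf_def by simp
  finally show ?thesis using d by simp
qed

lemma Kf_nonneg: "\<rho> \<in> {1<..<R} \<Longrightarrow> 0 \<le> Kf \<rho>"
  unfolding Kf_def
  by (intro mult_nonneg_nonneg integral_nonneg integrable_continuous_real cw1[OF cont_Dn])
     (auto simp: Dnorm2_def)

end

context harm begin

lemma Gf_ftc:
  assumes "1 < a" "a \<le> b" "b < R"
  shows "(Kf has_integral (Gf b - Gf a)) {a..b}"
  by (rule fundamental_theorem_of_calculus[OF assms(2)])
     (use assms in \<open>auto simp: has_real_derivative_iff_has_vector_derivative[symmetric]
         intro!: DERIV_subset[OF G_deriv]\<close>)

lemma annulus_int:
  assumes "1 < a" "a < b" "b < R"
  shows "(Dnorm2 h has_integral pi * (Gf b - Gf a)) (annulus a b)"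
proof -
  have c: "continuous_on {z. a \<le> cmod z \<and> cmod z \<le> b} (Dnorm2 h)"
    by (rule continuous_on_subset[OF cont_Dn]) (use assms in \<open>auto simp: annulus_def\<close>)
  have "integral {a..b} (\<lambda>r. integral {0..2*pi} (\<lambda>t. r * Dnorm2 h (of_real r * cis t)))
      = integral {a..b} (\<lambda>r. pi * Kf r)"
    by (rule integral_cong) (simp add: Kf_def)
  also have "\<dots> = pi * (Gf b - Gf a)"
    using integral_unique[OF Gf_ftc[OF assms(1) _ assms(3)]] assms by simp
  finally show ?thesis using polar_integral[OF _ assms(2) c] assms(1) by simp
qed

lemma Gf_mono:
  assumes "1 < x" "x \<le> y" "y < R"
  shows "Gf x \<le> Gf y"
proof -
  have "0 \<le> integral {x..y} Kf"
    by (rule integral_nonneg) (use Gf_ftc[OF assms] Kf_nonneg assms in auto)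
  then show ?thesis using integral_unique[OF Gf_ftc[OF assms]] by simp
qed

lemma Dn_zero_imp:
  assumes "z \<in> annulus 1 R" "Dnorm2 h z = 0"
  shows "(h has_derivative (\<lambda>v. 0)) (at z)"
proof -
  have "(cmod (px h z))\<^sup>2 + (cmod (py h z))\<^sup>2 = 0" using assms(2) by (simp add: Dnorm2_eq)
  then have "px h z = 0" "py h z = 0"
    by (smt (verit) norm_eq_zero power2_less_eq_zero_iff zero_le_power2)+
  then show ?thesis using deriv_pxpy[OF diff_h[OF assms(1)]] by simp
qed

lemma polar_repr: "z = of_real (cmod z) * cis (Arg2pi z)"
  by (simp add: complex_eq_iff cos_Arg2pi sin_Arg2pi)

lemma Gf_strict:
  assumes inj: "inj_on h (annulus 1 R)" and xy: "1 < x" "x < y" "y < R"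
  shows "Gf x < Gf y"
proof (rule ccontr)
  assume "\<not> Gf x < Gf y"
  then have ge: "Gf y \<le> Gf x" by simp
  have const: "Gf m = Gf x" if "x \<le> m" "m \<le> y" for m
  proof -
    have "Gf x \<le> Gf m" by (rule Gf_mono) (use that xy in auto)
    moreover have "Gf m \<le> Gf y" by (rule Gf_mono) (use that xy in auto)
    ultimately show ?thesis using ge by linarith
  qed
  have K0: "Kf m = 0" if m: "x < m" "m < y" for m
  proof (rule DERIV_local_const[OF G_deriv])
    show "m \<in> {1<..<R}" using m xy by auto
    show "0 < min (m - x) (y - m)" using m by simp
    show "\<forall>z. \<bar>m - z\<bar> < min (m - x) (y - m) \<longrightarrow> Gf m = Gf z"
    proof (intro allI impI)
      fix z assume "\<bar>m - z\<bar> < min (m - x) (y - m)"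
      then have "x \<le> z" "z \<le> y" by (auto simp: abs_less_iff)
      then show "Gf m = Gf z" using const[of z] const[of m] m by simp
    qed
  qed
  have Dn0: "Dnorm2 h z = 0" if z: "x < cmod z" "cmod z < y" for z
  proof -
    let ?m = "cmod z"
    have m1: "1 < ?m" "?m < R" using z xy by auto
    have "integral {0..2*pi} (\<lambda>t. Dnorm2 h (of_real ?m * cis t)) = 0"
      using K0[OF z] m1 by (auto simp: Kf_def)
    moreover have "continuous_on {0..2*pi} (\<lambda>t. Dnorm2 h (of_real ?m * cis t))"
      by (rule cw1[OF cont_Dn m1])
    moreover have "\<And>t. 0 \<le> Dnorm2 h (of_real ?m * cis t)" by (simp add: Dnorm2_def)
    ultimately have "\<forall>t\<in>{0..2*pi}. Dnorm2 h (of_real ?m * cis t) = 0"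
      using integral_eq_0_iff[of 0 "2*pi" "\<lambda>t. Dnorm2 h (of_real ?m * cis t)"] by simp
    moreover have "Arg2pi z \<in> {0..2*pi}" using Arg2pi[of z] by simp
    ultimately have "Dnorm2 h (of_real ?m * cis (Arg2pi z)) = 0" by blast
    then show ?thesis using polar_repr[of z] by simp
  qed
  define c :: complex where "c = of_real ((x + y) / 2)"
  define e where "e = (y - x) / 2"
  have e0: "0 < e" using xy by (simp add: e_def)
  have cc: "cmod c = (x + y) / 2" using xy unfolding c_def norm_of_real by simp
  have inball: "x < cmod z \<and> cmod z < y" if "z \<in> ball c e" for z
  proof -
    have "dist c z < e" using that by simp
    moreover have "\<bar>cmod c - cmod z\<bar> \<le> dist c z" by (metis dist_norm norm_triangle_ineq3)
    ultimately have "\<bar>cmod c - cmod z\<bar> < e" by linarith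
    then show ?thesis unfolding cc e_def by (auto simp: abs_less_iff field_simps)
  qed
  have ballA: "z \<in> annulus 1 R" if "z \<in> ball c e" for z
    using inball[OF that] xy by (simp add: annulus_def)
  have "\<exists>k. \<forall>z\<in>ball c e. h z = k"
  proof (rule has_derivative_zero_constant[OF convex_ball])
    fix z assume z: "z \<in> ball c e"
    have "(h has_derivative (\<lambda>v. 0)) (at z)"
      using Dn_zero_imp[OF ballA[OF z] Dn0] inball[OF z] by simp
    then show "(h has_derivative (\<lambda>v. 0)) (at z within ball c e)"
      by (rule has_derivative_at_withinI)
  qed
  then obtain k where k: "\<And>z. z \<in> ball c e \<Longrightarrow> h z = k" by blast
  have c1: "c \<in> ball c e" using e0 by simp
  have c2: "c + of_real (e/2) \<in> ball c e" using e0 by (simp add: dist_norm)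
  have "h c = h (c + of_real (e/2))" using k[OF c1] k[OF c2] by simp
  then have "c = c + of_real (e/2)" using inj ballA[OF c1] ballA[OF c2] unfolding inj_on_def by blast
  then show False using e0 by simp
qed

end

locale hstar = harm +
  assumes inj: "inj_on h (annulus 1 R)"
    and gt1: "\<And>z. z \<in> annulus 1 R \<Longrightarrow> 1 < cmod (h z)"
    and bdry: "\<forall>e>0. \<exists>d>0. \<forall>z\<in>annulus 1 R. cmod z < 1 + d \<longrightarrow> \<bar>cmod (h z) - 1\<bar> < e"
begin

lemma U_int_eq: "U h \<rho> = 1 / (2*pi) * integral {0..2*pi} (\<lambda>t. (cmod (h (of_real \<rho> * cis t)))\<^sup>2)"
  by (simp add: U_def)

lemma cont_sq: "\<rho> \<in> {1<..<R} \<Longrightarrow> continuous_on {0..2*pi} (\<lambda>t. (cmod (h (of_real \<rho> * cis t)))\<^sup>2)"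
  by (intro continuous_intros cw1[OF cont_h]) auto

lemma U_gt1:
  assumes \<rho>: "\<rho> \<in> {1<..<R}"
  shows "1 < U h \<rho>"
proof -
  define f where "f t = (cmod (h (of_real \<rho> * cis t)))\<^sup>2 - 1" for t
  have pos: "0 < f t" for t
  proof -
    have "1 < cmod (h (of_real \<rho> * cis t))" using gt1 wA \<rho> by auto
    then have "1 < (cmod (h (of_real \<rho> * cis t)))\<^sup>2" by (rule one_less_power) simp
    then show ?thesis unfolding f_def by simp
  qed
  have cf: "continuous_on {0..2*pi} f" unfolding f_def by (intro continuous_intros cont_sq[OF \<rho>])
  have "integral {0..2*pi} f \<noteq> 0"
  proof
    assume "integral {0..2*pi} f = 0"
    then have "\<forall>x\<in>{0..2*pi}. f x = 0"
      using integral_eq_0_iff[OF cf] pos by (simp add: less_imp_le)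
    moreover have "(0::real) \<in> {0..2*pi}" by simp
    ultimately have "f 0 = 0" by blast
    then show False using pos[of 0] by simp
  qed
  moreover have "0 \<le> integral {0..2*pi} f"
    by (rule integral_nonneg) (use cf integrable_continuous_real pos in \<open>auto intro: less_imp_le\<close>)
  ultimately have ip: "0 < integral {0..2*pi} f" by simp
  have "integral {0..2*pi} f = integral {0..2*pi} (\<lambda>t. (cmod (h (of_real \<rho> * cis t)))\<^sup>2) - 2*pi"
    unfolding f_def
    by (subst integral_diff) (auto intro!: integrable_continuous_real cont_sq[OF \<rho>])
  then have "integral {0..2*pi} (\<lambda>t. (cmod (h (of_real \<rho> * cis t)))\<^sup>2) > 2 * pi" using ip by simp
  then show ?thesis unfolding U_int_eq by (simp add: field_simps)
qed

lemma U_le: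
  assumes \<rho>: "\<rho> \<in> {1<..<R}" and M: "\<And>t. cmod (h (of_real \<rho> * cis t)) \<le> M"
  shows "U h \<rho> \<le> M\<^sup>2"
proof -
  have "integral {0..2*pi} (\<lambda>t. (cmod (h (of_real \<rho> * cis t)))\<^sup>2) \<le> integral {0..2*pi} (\<lambda>t. M\<^sup>2)"
    by (rule integral_le) (auto intro!: integrable_continuous_real cont_sq[OF \<rho>] power_mono M)
  then show ?thesis unfolding U_int_eq by (simp add: field_simps)
qed

lemma Gf_nonneg:
  assumes \<rho>0: "\<rho>0 \<in> {1<..<R}"
  shows "0 \<le> Gf \<rho>0"
proof (rule ccontr)
  assume neg: "\<not> 0 \<le> Gf \<rho>0"
  define V where "V = U h \<rho>0"
  have V1: "1 < V" using U_gt1[OF \<rho>0] by (simp add: V_def)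
  define e where "e = min 1 ((V - 1) / 4)"
  have e01: "0 < e" "e \<le> 1" using V1 unfolding e_def by simp_all
  have e02: "e \<le> (V - 1) / 4" unfolding e_def by (rule min.cobounded2)
  note e0 = e01 e02
  obtain d where d: "d > 0" "\<And>z. z \<in> annulus 1 R \<Longrightarrow> cmod z < 1 + d \<Longrightarrow> \<bar>cmod (h z) - 1\<bar> < e"
    using bdry e0(1) by blast
  define m where "m = min d (\<rho>0 - 1)"
  define \<rho> where "\<rho> = 1 + m / 2"
  have mm: "0 < m" "m \<le> d" "m \<le> \<rho>0 - 1"
    using d(1) \<rho>0 by (auto simp: m_def)
  have \<rho>1a: "1 < \<rho>" using mm unfolding \<rho>_def by linarith
  have \<rho>1b: "\<rho> < \<rho>0" using mm unfolding \<rho>_def by linarith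
  have \<rho>1c: "\<rho> < 1 + d" using mm unfolding \<rho>_def by linarith
  note \<rho>1 = \<rho>1a \<rho>1b \<rho>1c
  have \<rho>U: "\<rho> \<in> {1<..<R}" using \<rho>1 \<rho>0 by auto
  have "cmod (h (of_real \<rho> * cis t)) \<le> 1 + e" for t
  proof -
    have "of_real \<rho> * cis t \<in> annulus 1 R" using wA \<rho>U by auto
    moreover have "cmod (of_real \<rho> * cis t) < 1 + d" using \<rho>1 by (simp add: norm_mult)
    ultimately show ?thesis using d(2) by fastforce
  qed
  then have "U h \<rho> \<le> (1 + e)\<^sup>2" by (rule U_le[OF \<rho>U])
  also have "\<dots> < V"
  proof -
    have "e * e \<le> e" using e0 by (simp add: mult_left_le)
    moreover have "(1 + e)\<^sup>2 = 1 + 2 * e + e * e" by (simp add: power2_eq_square algebra_simps)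
    ultimately have "(1 + e)\<^sup>2 \<le> 1 + 3 * e" by linarith
    moreover have "4 * e \<le> V - 1" using e02 by (simp add: field_simps)
    then have "1 + 3 * e < V" using e01 V1 by linarith
    ultimately show ?thesis by linarith
  qed
  finally have lt: "U h \<rho> < V" .
  have der: "DERIV (U h) x :> deriv (U h) x" if "\<rho> \<le> x" "x \<le> \<rho>0" for x
  proof -
    have "x \<in> {1<..<R}" using that \<rho>1 \<rho>0 by auto
    then show ?thesis using U_deriv DERIV_imp_deriv by metis
  qed
  obtain \<xi> where \<xi>: "\<rho> < \<xi>" "\<xi> < \<rho>0" "U h \<rho>0 - U h \<rho> = (\<rho>0 - \<rho>) * deriv (U h) \<xi>"
    using MVT2[OF \<rho>1(2) der] by blast
  have \<xi>U: "\<xi> \<in> {1<..<R}" using \<xi> \<rho>1 \<rho>0 by auto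
  have "Gf \<xi> \<le> Gf \<rho>0" by (rule Gf_mono) (use \<xi> \<rho>1 \<rho>0 in auto)
  then have "Gf \<xi> < 0" using neg by simp
  moreover have "\<xi> * deriv (U h) \<xi> = Gf \<xi>" by (rule G_eq[OF \<xi>U])
  ultimately have "deriv (U h) \<xi> < 0"
  proof -
    assume a1: "Gf \<xi> < 0" and a2: "\<xi> * deriv (U h) \<xi> = Gf \<xi>"
    show ?thesis
    proof (rule ccontr)
      assume "\<not> deriv (U h) \<xi> < 0"
      then have "0 \<le> \<xi> * deriv (U h) \<xi>" using \<xi>U by simp
      then show False using a1 a2 by simp
    qed
  qed
  then have "U h \<rho>0 - U h \<rho> < 0" using \<xi>(3) \<rho>1 by (simp add: mult_pos_neg)
  then show False using lt V_def by simp
qed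

definition Lim1 where "Lim1 = Inf (Gf ` {1<..<R})"

lemma Lim1_le: "\<rho> \<in> {1<..<R} \<Longrightarrow> Lim1 \<le> Gf \<rho>"
  unfolding Lim1_def by (rule cInf_lower) (auto intro!: bdd_belowI[of _ 0] Gf_nonneg)

lemma Lim1_nonneg: "0 \<le> Lim1"
  unfolding Lim1_def by (rule cInf_greatest) (use R1 Gf_nonneg in auto)

lemma Gf_tendsto: "(Gf \<longlongrightarrow> Lim1) (at_right 1)"
proof (rule tendstoI)
  fix e :: real assume e: "0 < e"
  have ne: "Gf ` {1<..<R} \<noteq> {}" using R1 by auto
  obtain y where y: "y \<in> Gf ` {1<..<R}" "y < Lim1 + e"
    using cInf_lessD[OF ne, of "Lim1 + e"] e unfolding Lim1_def by auto
  then obtain \<rho>1 where \<rho>1: "\<rho>1 \<in> {1<..<R}" "Gf \<rho>1 < Lim1 + e" by auto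
  show "\<forall>\<^sub>F x in at_right 1. dist (Gf x) Lim1 < e"
    unfolding eventually_at_right_field
  proof (intro exI[of _ \<rho>1] conjI allI impI)
    show "1 < \<rho>1" using \<rho>1 by simp
    fix x assume x: "1 < x" "x < \<rho>1"
    have "Lim1 \<le> Gf x" by (rule Lim1_le) (use x \<rho>1 in auto)
    moreover have "Gf x \<le> Gf \<rho>1" by (rule Gf_mono) (use x \<rho>1 in auto)
    ultimately show "dist (Gf x) Lim1 < e" using \<rho>1 by (simp add: dist_real_def)
  qed
qed

lemma main_tendsto: "((\<lambda>\<rho>. \<rho> * deriv (U h) \<rho>) \<longlongrightarrow> Lim1) (at_right 1)"
proof -
  have e: "\<forall>\<^sub>F x in at_right 1. Gf x = x * deriv (U h) x"
    unfolding eventually_at_right_field using R1 G_eq by (intro exI[of _ R]) auto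
  show ?thesis by (rule iffD1[OF tendsto_cong[OF e] Gf_tendsto])
qed

lemma main_integral:
  assumes \<rho>: "\<rho> \<in> {1<..<R}"
  shows "Dnorm2 h integrable_on annulus 1 \<rho> \<and> integral (annulus 1 \<rho>) (Dnorm2 h) = pi * (Gf \<rho> - Lim1)"
proof -
  define a where "a k = 1 + (\<rho> - 1) / real (k + 2)" for k :: nat
  have a1: "1 < a k" "a k < \<rho>" for k
  proof -
    have r: "1 < \<rho>" using \<rho> by simp
    have "0 < (\<rho> - 1) / real (k + 2)" using r by simp
    moreover have "(\<rho> - 1) / real (k + 2) < \<rho> - 1" using r by (simp add: divide_less_eq)
    ultimately show "1 < a k" "a k < \<rho>" unfolding a_def by linarith+
  qed
  have amono: "a (Suc k) \<le> a k" for k using \<rho> by (auto simp: a_def intro!: divide_left_mono)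
  have "(\<lambda>k. (\<rho> - 1) / real (k + 2)) \<longlonglongrightarrow> 0"
    using LIMSEQ_ignore_initial_segment[OF lim_const_over_n[of "\<rho> - 1"], of 2] by simp
  then have alim: "a \<longlonglongrightarrow> 1" unfolding a_def using tendsto_add[OF tendsto_const, of _ 0 _ 1] by simp
  have "filterlim a (at_right 1) sequentially"
    by (rule tendsto_imp_filterlim_at_right[OF alim]) (use a1 in auto)
  then have Glim: "(\<lambda>k. Gf (a k)) \<longlonglongrightarrow> Lim1" by (rule filterlim_compose[OF Gf_tendsto])
  define f where "f k z = (if z \<in> annulus (a k) \<rho> then Dnorm2 h z else 0)" for k z
  have sub: "annulus (a k) \<rho> \<subseteq> annulus 1 \<rho>" for k using a1[of k] by (auto simp: annulus_def)
  have hasf: "(f k has_integral pi * (Gf \<rho> - Gf (a k))) (annulus 1 \<rho>)" for k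
    unfolding f_def has_integral_restrict[OF sub]
    by (rule annulus_int) (use a1 \<rho> in auto)
  have Dn_nn: "0 \<le> Dnorm2 h z" for z by (simp add: Dnorm2_def)
  have mc: "Dnorm2 h integrable_on annulus 1 \<rho> \<and>
      (\<lambda>k. integral (annulus 1 \<rho>) (f k)) \<longlonglongrightarrow> integral (annulus 1 \<rho>) (Dnorm2 h)"
  proof (rule monotone_convergence_increasing)
    show "f k integrable_on annulus 1 \<rho>" for k using hasf by blast
    show "f k x \<le> f (Suc k) x" for k x
    proof -
      have "annulus (a k) \<rho> \<subseteq> annulus (a (Suc k)) \<rho>" using amono[of k] by (auto simp: annulus_def)
      then show ?thesis unfolding f_def using Dn_nn by auto
    qed
    show "(\<lambda>k. f k x) \<longlonglongrightarrow> Dnorm2 h x" if x: "x \<in> annulus 1 \<rho>" for x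
    proof (rule tendsto_eventually)
      have "\<forall>\<^sub>F k in sequentially. a k < cmod x"
        using order_tendstoD(2)[OF alim] x by (simp add: annulus_def)
      then show "\<forall>\<^sub>F k in sequentially. f k x = Dnorm2 h x"
        by eventually_elim (use x in \<open>simp add: f_def annulus_def\<close>)
    qed
    have "norm (integral (annulus 1 \<rho>) (f k)) \<le> pi * (Gf \<rho> - Lim1)" for k
    proof -
      have "Gf (a k) \<le> Gf \<rho>" by (rule Gf_mono) (use a1[of k] \<rho> in auto)
      moreover have "Lim1 \<le> Gf (a k)" by (rule Lim1_le) (use a1[of k] \<rho> in auto)
      ultimately show ?thesis using integral_unique[OF hasf[of k]] by simp
    qed
    then show "bounded (range (\<lambda>k. integral (annulus 1 \<rho>) (f k)))"
      unfolding bounded_iff by blast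
  qed
  have "(\<lambda>k. integral (annulus 1 \<rho>) (f k)) \<longlonglongrightarrow> pi * (Gf \<rho> - Lim1)"
    unfolding integral_unique[OF hasf] by (intro tendsto_intros Glim)
  then show ?thesis using mc LIMSEQ_unique by blast
qed

end

theorem mainTheorem6:
  fixes R :: real and h :: "complex \<Rightarrow> complex"
  assumes "1 < R" and "h \<in> H_star R"
  shows "(\<forall>\<rho>\<in>{1<..<R}. U h differentiable (at \<rho>)) \<and>
         strict_mono_on {1<..<R} (\<lambda>\<rho>. \<rho> * deriv (U h) \<rho>) \<and>
         (\<forall>\<rho>\<in>{1<..<R}. U h \<rho> > 1) \<and>
         (\<exists>L::real. ((\<lambda>\<rho>. \<rho> * deriv (U h) \<rho>) \<longlongrightarrow> L) (at_right 1) \<and> 0 \<le> L \<and>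
            (\<forall>\<rho>\<in>{1<..<R}. Dnorm2 h integrable_on annulus 1 \<rho> \<and>
               (1 / pi) * integral (annulus 1 \<rho>) (Dnorm2 h) = \<rho> * deriv (U h) \<rho> - L))"
proof -
  have hh: "harmonic_on (annulus 1 R) h"
    and hom: "\<exists>g. homeomorphism (annulus 1 R) (h ` annulus 1 R) h g"
    and comp: "connected_component_set (- h ` annulus 1 R) 0 = cball 0 1"
    and bd: "\<forall>e>0. \<exists>d>0. \<forall>z\<in>annulus 1 R. cmod z < 1 + d \<longrightarrow> \<bar>cmod (h z) - 1\<bar> < e"
    using assms(2) unfolding H_star_def by blast+
  obtain g where g: "homeomorphism (annulus 1 R) (h ` annulus 1 R) h g" using hom by blast
  have inj: "inj_on h (annulus 1 R)"
    using g unfolding homeomorphism_def by (metis inj_on_inverseI)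
  have gt1: "1 < cmod (h z)" if z: "z \<in> annulus 1 R" for z
  proof (rule ccontr)
    assume "\<not> 1 < cmod (h z)"
    then have "h z \<in> cball 0 1" by simp
    then have "h z \<in> - h ` annulus 1 R" using comp connected_component_subset by blast
    then show False using z by blast
  qed
  interpret hstar R h
    by unfold_locales (use assms(1) hh inj gt1 bd in auto)
  have sm: "strict_mono_on {1<..<R} (\<lambda>\<rho>. \<rho> * deriv (U h) \<rho>)"
  proof (rule strict_mono_onI)
    fix r s assume "r \<in> {1<..<R}" "s \<in> {1<..<R}" "r < s"
    then show "r * deriv (U h) r < s * deriv (U h) s"
      using G_eq Gf_strict[OF inj] by auto
  qed
  have lim: "((\<lambda>\<rho>. \<rho> * deriv (U h) \<rho>) \<longlongrightarrow> Lim1) (at_right 1) \<and> 0 \<le> Lim1 \<and>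
            (\<forall>\<rho>\<in>{1<..<R}. Dnorm2 h integrable_on annulus 1 \<rho> \<and>
               (1 / pi) * integral (annulus 1 \<rho>) (Dnorm2 h) = \<rho> * deriv (U h) \<rho> - Lim1)"
  proof (intro conjI ballI main_tendsto Lim1_nonneg)
    fix \<rho> assume \<rho>: "\<rho> \<in> {1<..<R}"
    show "Dnorm2 h integrable_on annulus 1 \<rho>" using main_integral[OF \<rho>] by blast
    show "1 / pi * integral (annulus 1 \<rho>) (Dnorm2 h) = \<rho> * deriv (U h) \<rho> - Lim1"
      using main_integral[OF \<rho>] G_eq[OF \<rho>] by simp
  qed
  show ?thesis using U_differentiable sm U_gt1 lim by blast
qed


end
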